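(* Let $E=[n]$, let $f:2^E\to\mathbb{Z}_{\ge 0}$ be a nonnegative integer-valued submodular function with $M:=\|f\|_\infty=\max_{S\subseteq E}|f(S)|<\infty$, let $F$ be its Lovász extension, and let $d\in\mathbb{Z}^n$ be a nonzero vector. For $R>0$ define \[ \Phi(x)=F(x)+g_R(x),\qquad g_R(x):=R\,|1-d^\top x|,\qquad x\in\mathbb{R}^n. \] If $R>M$, then every minimizer $x^\star$ of $\Phi$ over $\mathbb{R}^n$ satisfies $d^\top x^\star=1$. In particular, for such $R$ the constrained problem $\min\{F(x): x\in\mathbb{R}^n,\ d^\top x=1\}$ is equivalent to the unconstrained problem $\min_{x\in\mathbb{R}^n}\Phi(x)$.
   Context: For $x\in\mathbb{R}^n$ and $S\subseteq E$ write $x(S)=\sum_{i\in S}x_i$. The base polytope of $f$ is $B(f)=\{x\in\mathbb{R}^n: x(S)\le f(S)\ \forall S\subseteq E,\ x(E)=f(E)\}$. The Lovász extension of $f$ is $F(x)=\max_{v\in B(f)}v^\top x$; equivalently $F(x)=\sum_{i=1}^n x_{\pi_i}(f(S_i)-f(S_{i-1}))$, where $\pi$ is a permutation with $x_{\pi_1}\ge\cdots\ge x_{\pi_n}$ (ties broken lexicographically), $S_i=\{\pi_1,\dots,\pi_i\}$ and $S_0=\emptyset$. *)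

theory Defs
  imports Main "HOL-Analysis.Analysis"
begin

text \<open>Ground set E is the finite type 'n (E = UNIV); vectors in R^E are functions 'n \<Rightarrow> real.\<close>

definition submodular :: "('n::finite set \<Rightarrow> real) \<Rightarrow> bool" where
  "submodular f \<longleftrightarrow> (\<forall>S T. f (S \<union> T) + f (S \<inter> T) \<le> f S + f T)"

definition base_polytope :: "('n::finite set \<Rightarrow> real) \<Rightarrow> ('n \<Rightarrow> real) set" where
  "base_polytope f = {x. (\<forall>S. sum x S \<le> f S) \<and> sum x UNIV = f UNIV}"

definition lovasz_ext :: "('n::finite set \<Rightarrow> real) \<Rightarrow> ('n \<Rightarrow> real) \<Rightarrow> real" where
  "lovasz_ext f x = Sup ((\<lambda>v. \<Sum>i\<in>UNIV. v i * x i) ` base_polytope f)"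

end

theory Submission
  imports Defs
begin

lemma bp_bound:
  fixes f :: "'n::finite set \<Rightarrow> real"
  assumes nn: "\<forall>S. f S \<ge> 0" and M: "\<forall>S. \<bar>f S\<bar> \<le> M" and v: "v \<in> base_polytope f"
  shows "\<bar>v i\<bar> \<le> M"
proof -
  have a: "\<forall>S. sum v S \<le> f S" and b: "sum v UNIV = f UNIV" using v by (auto simp: base_polytope_def)
  have "v i \<le> f {i}" using a[rule_format, of "{i}"] by simp
  moreover have "sum v UNIV = v i + sum v (UNIV - {i})"
    by (simp add: sum.remove)
  moreover have "sum v (UNIV - {i}) \<le> f (UNIV - {i})" using a by blast
  ultimately show ?thesis using M[rule_format, of "{i}"] M[rule_format, of "UNIV - {i}"] nn b
    by (smt (verit))
qed

lemma lovasz_shift: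
  fixes f :: "'n::finite set \<Rightarrow> real"
  assumes nn: "\<forall>S. f S \<ge> 0" and M: "\<forall>S. \<bar>f S\<bar> \<le> M"
  shows "lovasz_ext f (\<lambda>j. x j + (if j = i then s else 0)) \<le> lovasz_ext f x + M * \<bar>s\<bar>"
proof (cases "base_polytope f = {}")
  case True
  have M0: "M \<ge> 0" using M by (meson abs_ge_zero order_trans)
  then show ?thesis using True by (simp add: lovasz_ext_def)
next
  case False
  have bnd: "\<And>v j. v \<in> base_polytope f \<Longrightarrow> \<bar>v j\<bar> \<le> M" using bp_bound[OF nn M] by blast
  let ?A = "(\<lambda>v. \<Sum>j\<in>UNIV. v j * x j) ` base_polytope f"
  have bdd: "bdd_above ?A"
  proof (rule bdd_aboveI2)
    fix v assume v: "v \<in> base_polytope f"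
    have "(\<Sum>j\<in>UNIV. v j * x j) \<le> (\<Sum>j\<in>UNIV. M * \<bar>x j\<bar>)"
    proof (rule sum_mono)
      fix j
      have "v j * x j \<le> \<bar>v j\<bar> * \<bar>x j\<bar>" by (metis abs_ge_self abs_mult)
      also have "\<dots> \<le> M * \<bar>x j\<bar>" using bnd[OF v] by (simp add: mult_right_mono)
      finally show "v j * x j \<le> M * \<bar>x j\<bar>" .
    qed
    then show "(\<Sum>j\<in>UNIV. v j * x j) \<le> (\<Sum>j\<in>UNIV. M * \<bar>x j\<bar>)" .
  qed
  show ?thesis unfolding lovasz_ext_def
  proof (rule cSup_least)
    show "(\<lambda>v. \<Sum>j\<in>UNIV. v j * (x j + (if j = i then s else 0))) ` base_polytope f \<noteq> {}"
      using False by simp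
  next
    fix z assume "z \<in> (\<lambda>v. \<Sum>j\<in>UNIV. v j * (x j + (if j = i then s else 0))) ` base_polytope f"
    then obtain v where v: "v \<in> base_polytope f" and z: "z = (\<Sum>j\<in>UNIV. v j * (x j + (if j = i then s else 0)))" by blast
    have "z = (\<Sum>j\<in>UNIV. v j * x j) + v i * s"
      proof -
      have "z = (\<Sum>j\<in>UNIV. v j * x j + (if j = i then v j * s else 0))"
        unfolding z by (rule sum.cong) (auto simp: distrib_left)
      also have "\<dots> = (\<Sum>j\<in>UNIV. v j * x j) + v i * s" by (simp add: sum.distrib)
      finally show ?thesis .
    qed
    also have "\<dots> \<le> Sup ?A + M * \<bar>s\<bar>"
    proof (rule add_mono)
      show "(\<Sum>j\<in>UNIV. v j * x j) \<le> Sup ?A" using bdd v by (intro cSup_upper) auto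
      have "v i * s \<le> \<bar>v i\<bar> * \<bar>s\<bar>" by (metis abs_ge_self abs_mult)
      also have "\<dots> \<le> M * \<bar>s\<bar>" using bnd[OF v] by (simp add: mult_right_mono)
      finally show "v i * s \<le> M * \<bar>s\<bar>" .
    qed
    finally show "z \<le> Sup ?A + M * \<bar>s\<bar>" .
  qed
qed

theorem lemma2:
  fixes f :: "'n::finite set \<Rightarrow> int" and d :: "'n \<Rightarrow> int" and R :: real
  assumes nonneg: "\<forall>S. f S \<ge> 0"
    and sub: "submodular (\<lambda>S. real_of_int (f S))"
    and dnz: "d \<noteq> (\<lambda>_. 0)"
    and R_gt: "R > real_of_int (Max (range (\<lambda>S. \<bar>f S\<bar>)))"
  defines "\<Phi> \<equiv> (\<lambda>x. lovasz_ext (\<lambda>S. real_of_int (f S)) x + R * \<bar>1 - (\<Sum>i\<in>UNIV. real_of_int (d i) * x i)\<bar>)"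
  shows "(\<forall>x. (\<forall>y. \<Phi> x \<le> \<Phi> y) \<longrightarrow> (\<Sum>i\<in>UNIV. real_of_int (d i) * x i) = 1)
       \<and> (\<forall>x. (\<forall>y. \<Phi> x \<le> \<Phi> y) \<longleftrightarrow>
              ((\<Sum>i\<in>UNIV. real_of_int (d i) * x i) = 1 \<and>
               (\<forall>y. (\<Sum>i\<in>UNIV. real_of_int (d i) * y i) = 1 \<longrightarrow> lovasz_ext (\<lambda>S. real_of_int (f S)) x \<le> lovasz_ext (\<lambda>S. real_of_int (f S)) y)))"
proof -
  define M where "M = real_of_int (Max (range (\<lambda>S. \<bar>f S\<bar>)))"
  define F where "F = lovasz_ext (\<lambda>S. real_of_int (f S))"
  define D where "D = (\<lambda>x::'n \<Rightarrow> real. \<Sum>i\<in>UNIV. real_of_int (d i) * x i)"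
  have PhiF: "\<And>x. \<Phi> x = F x + R * \<bar>1 - D x\<bar>" by (simp add: \<Phi>_def F_def D_def)
  have Mb: "\<forall>S. \<bar>real_of_int (f S)\<bar> \<le> M"
  proof
    fix S
    have "\<bar>f S\<bar> \<le> Max (range (\<lambda>S. \<bar>f S\<bar>))" by (rule Max_ge) auto
    then show "\<bar>real_of_int (f S)\<bar> \<le> M" unfolding M_def by linarith
  qed
  have nn: "\<forall>S. real_of_int (f S) \<ge> 0" using nonneg by simp
  have RM: "R > M" using R_gt M_def by simp
  obtain i where di: "d i \<noteq> 0" using dnz by auto
  have di1: "\<bar>real_of_int (d i)\<bar> \<ge> 1" using di by linarith
  have proj: "\<exists>y'. D y' = 1 \<and> F y' + (R - M) * \<bar>1 - D y\<bar> \<le> \<Phi> y" for y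
  proof -
    define s where "s = (1 - D y) / real_of_int (d i)"
    define y' where "y' = (\<lambda>j. y j + (if j = i then s else 0))"
    have "D y' = D y + real_of_int (d i) * s"
      proof -
      have "D y' = (\<Sum>j\<in>UNIV. real_of_int (d j) * y j + (if j = i then real_of_int (d j) * s else 0))"
        unfolding D_def by (rule sum.cong) (auto simp: y'_def distrib_left)
      also have "\<dots> = D y + real_of_int (d i) * s" unfolding D_def by (simp add: sum.distrib)
      finally show ?thesis .
    qed
    also have "\<dots> = 1" unfolding s_def using di by simp
    finally have Dy': "D y' = 1" .
    have sa: "\<bar>s\<bar> = \<bar>1 - D y\<bar> / \<bar>real_of_int (d i)\<bar>" by (simp add: s_def abs_divide)
    have "\<bar>1 - D y\<bar> \<le> \<bar>1 - D y\<bar> * \<bar>real_of_int (d i)\<bar>"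
      using di1 mult_left_mono[OF di1, of "\<bar>1 - D y\<bar>"] by simp
    then have "\<bar>s\<bar> \<le> \<bar>1 - D y\<bar>" unfolding sa using di1 di by (simp add: divide_le_eq)
    have M0: "M \<ge> 0" using Mb by (meson abs_ge_zero order_trans)
    have "F y' \<le> F y + M * \<bar>s\<bar>" unfolding F_def y'_def by (rule lovasz_shift[OF nn Mb])
    also have "\<dots> \<le> F y + M * \<bar>1 - D y\<bar>" using \<open>\<bar>s\<bar> \<le> _\<close> M0 by (simp add: mult_left_mono)
    finally show ?thesis using Dy' PhiF[of y] by (intro exI[of _ y']) (auto simp: algebra_simps)
  qed
  have P1: "D x = 1" if min: "\<forall>y. \<Phi> x \<le> \<Phi> y" for x
  proof (rule ccontr)
    assume "D x \<noteq> 1"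
    then have pos: "\<bar>1 - D x\<bar> > 0" by simp
    obtain y' where y': "D y' = 1" "F y' + (R - M) * \<bar>1 - D x\<bar> \<le> \<Phi> x" using proj by blast
    have "\<Phi> y' = F y'" using PhiF y' by simp
    moreover have "(R - M) * \<bar>1 - D x\<bar> > 0" using RM pos by simp
    ultimately have "\<Phi> y' < \<Phi> x" using y' by linarith
    then show False using min by (meson not_le)
  qed
  have P2: "(\<forall>y. \<Phi> x \<le> \<Phi> y) \<longleftrightarrow> (D x = 1 \<and> (\<forall>y. D y = 1 \<longrightarrow> F x \<le> F y))" for x
  proof
    assume min: "\<forall>y. \<Phi> x \<le> \<Phi> y"
    have "D x = 1" using P1 min by blast
    moreover have "F x \<le> F y" if "D y = 1" for y
      using min[rule_format, of y] PhiF[of x] PhiF[of y] that \<open>D x = 1\<close> by simp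
    ultimately show "D x = 1 \<and> (\<forall>y. D y = 1 \<longrightarrow> F x \<le> F y)" by blast
  next
    assume h: "D x = 1 \<and> (\<forall>y. D y = 1 \<longrightarrow> F x \<le> F y)"
    show "\<forall>y. \<Phi> x \<le> \<Phi> y"
    proof
      fix y
      obtain y' where y': "D y' = 1" "F y' + (R - M) * \<bar>1 - D y\<bar> \<le> \<Phi> y" using proj by blast
      have "(R - M) * \<bar>1 - D y\<bar> \<ge> 0" using RM by simp
      moreover have "F x \<le> F y'" using h y' by blast
      moreover have "\<Phi> x = F x" using PhiF h by simp
      ultimately show "\<Phi> x \<le> \<Phi> y" using y' by linarith
    qed
  qed
  show ?thesis using P1 P2 unfolding D_def F_def by blast
qed

end
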